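(* Every tree with more than two vertices is a skeleton.
   Context: For simple graphs $G$ and $H$, $H$ is a skeletal of $G$ if there is a surjective map $\phi:V(G)\to V(H)$ such that for all distinct vertices $a,b$ of $G$: $a$ and $b$ are adjacent in $G$ if and only if $\phi(a)=\phi(b)$ or $\phi(a)$ and $\phi(b)$ are adjacent in $H$. A skeletal $H$ of $G$ under $\phi$ is proper if $|\phi^{-1}(v)|\ge 2$ for at least one vertex $v$ of $H$. A graph is a skeleton if it has no proper skeletal. *)

theory Defs
  imports Main
begin

definition simple_graph :: "'a set \<Rightarrow> ('a \<Rightarrow> 'a \<Rightarrow> bool) \<Rightarrow> bool" where
  "simple_graph V E \<longleftrightarrow> finite V \<and> (\<forall>a b. E a b \<longrightarrow> a \<in> V \<and> b \<in> V)
     \<and> (\<forall>a b. E a b \<longrightarrow> E b a) \<and> (\<forall>a. \<not> E a a)"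

definition connected_graph :: "'a set \<Rightarrow> ('a \<Rightarrow> 'a \<Rightarrow> bool) \<Rightarrow> bool" where
  "connected_graph V E \<longleftrightarrow> V \<noteq> {} \<and> (\<forall>x\<in>V. \<forall>y\<in>V. E\<^sup>*\<^sup>* x y)"

definition has_cycle :: "'a set \<Rightarrow> ('a \<Rightarrow> 'a \<Rightarrow> bool) \<Rightarrow> bool" where
  "has_cycle V E \<longleftrightarrow> (\<exists>cs. length cs \<ge> 3 \<and> distinct cs \<and> set cs \<subseteq> V
      \<and> (\<forall>i. Suc i < length cs \<longrightarrow> E (cs ! i) (cs ! Suc i)) \<and> E (last cs) (hd cs))"

definition is_tree :: "'a set \<Rightarrow> ('a \<Rightarrow> 'a \<Rightarrow> bool) \<Rightarrow> bool" where
  "is_tree V E \<longleftrightarrow> simple_graph V E \<and> connected_graph V E \<and> \<not> has_cycle V E"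

definition is_skeletal :: "'a set \<Rightarrow> ('a \<Rightarrow> 'a \<Rightarrow> bool) \<Rightarrow> 'b set \<Rightarrow> ('b \<Rightarrow> 'b \<Rightarrow> bool)
    \<Rightarrow> ('a \<Rightarrow> 'b) \<Rightarrow> bool" where
  "is_skeletal V E W F \<phi> \<longleftrightarrow> simple_graph W F \<and> \<phi> ` V = W \<and>
     (\<forall>a\<in>V. \<forall>b\<in>V. a \<noteq> b \<longrightarrow> (E a b \<longleftrightarrow> \<phi> a = \<phi> b \<or> F (\<phi> a) (\<phi> b)))"

definition proper_skeletal :: "'a set \<Rightarrow> ('a \<Rightarrow> 'a \<Rightarrow> bool) \<Rightarrow> 'b set \<Rightarrow> ('b \<Rightarrow> 'b \<Rightarrow> bool)
    \<Rightarrow> ('a \<Rightarrow> 'b) \<Rightarrow> bool" where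
  "proper_skeletal V E W F \<phi> \<longleftrightarrow> is_skeletal V E W F \<phi> \<and>
     (\<exists>v\<in>W. card {a\<in>V. \<phi> a = v} \<ge> 2)"

end

theory Submission
  imports Defs
begin

lemma leave_pair:
  assumes "E\<^sup>*\<^sup>* x y" "x \<in> {a,b}" "y \<notin> {a,b}"
  shows "\<exists>u\<in>{a,b}. \<exists>c. c \<notin> {a,b} \<and> E u c"
  using assms
proof (induction rule: rtranclp_induct)
  case base then show ?case by simp
next
  case (step y z)
  show ?case
  proof (cases "y \<in> {a,b}")
    case True then show ?thesis using step by blast
  next
    case False then show ?thesis using step by blast
  qed
qed

theorem mainTheorem4:
  fixes V :: "'a set" and E :: "'a \<Rightarrow> 'a \<Rightarrow> bool"
  assumes "is_tree V E" and "card V > 2"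
  shows "\<not> (\<exists>(W :: 'b set) F \<phi>. proper_skeletal V E W F \<phi>)"
proof
  assume "\<exists>(W :: 'b set) F \<phi>. proper_skeletal V E W F \<phi>"
  then obtain W :: "'b set" and F \<phi> where P: "proper_skeletal V E W F \<phi>" by blast
  have sg: "simple_graph V E" and cg: "connected_graph V E" and nc: "\<not> has_cycle V E"
    using assms(1) unfolding is_tree_def by auto
  have fin: "finite V" using sg unfolding simple_graph_def by auto
  have sk: "\<forall>a\<in>V. \<forall>b\<in>V. a \<noteq> b \<longrightarrow> (E a b \<longleftrightarrow> \<phi> a = \<phi> b \<or> F (\<phi> a) (\<phi> b))"
    using P unfolding proper_skeletal_def is_skeletal_def by auto
  obtain v where "card {x\<in>V. \<phi> x = v} \<ge> 2"
    using P unfolding proper_skeletal_def by auto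
  moreover have "finite {x\<in>V. \<phi> x = v}" using fin by auto
  ultimately obtain a b where ab: "a \<in> V" "b \<in> V" "a \<noteq> b" "\<phi> a = \<phi> b"
    using card_le_Suc0_iff_eq[of "{x\<in>V. \<phi> x = v}"] by force
  have Eab: "E a b" using sk ab by auto
  have twin: "E a c \<longleftrightarrow> E b c" if "c \<in> V" "c \<noteq> a" "c \<noteq> b" for c
    using sk ab that by metis
  have "\<not> V \<subseteq> {a,b}"
  proof
    assume "V \<subseteq> {a,b}"
    then have "card V \<le> card {a,b}" by (simp add: card_mono)
    also have "\<dots> \<le> 2" by (simp add: card_insert_le_m1)
    finally show False using assms(2) by simp
  qed
  then obtain d where d: "d \<in> V" "d \<notin> {a,b}" by blast
  have "E\<^sup>*\<^sup>* a d" using cg ab d unfolding connected_graph_def by auto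
  then obtain u c where u: "u \<in> {a,b}" "c \<notin> {a,b}" "E u c"
    using leave_pair[of E a d a b] d by auto
  have cV: "c \<in> V" using u sg unfolding simple_graph_def by auto
  have Eac: "E a c" and Ebc: "E b c" using u twin[OF cV] by auto
  have Eca: "E c a" using Eac sg unfolding simple_graph_def by auto
  have "has_cycle V E"
    unfolding has_cycle_def
  proof (intro exI[of _ "[a,b,c]"] conjI)
    show "\<forall>i. Suc i < length [a,b,c] \<longrightarrow> E ([a,b,c] ! i) ([a,b,c] ! Suc i)"
    proof (intro allI impI)
      fix i assume "Suc i < length [a,b,c]"
      then have "i = 0 \<or> i = 1" by auto
      then show "E ([a,b,c] ! i) ([a,b,c] ! Suc i)" using Eab Ebc by auto
    qed
  qed (use ab u cV Eca in auto)
  with nc show False by simp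
qed

end
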